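(* Let $U$ be the set of positive integers $N$ for which there are no antipalindromic numbers $A,B$ with $N=A/B$. Then the lower density of $U$ satisfies $\liminf_{n\to\infty}\frac1n\,|U\cap\{1,\dots,n\}|\ge \frac1{60}$.
   Context: A positive integer $n$ is antipalindromic if its binary representation $w=w_1\cdots w_L$ (most significant digit first, no leading zeros) has even length $L$ and satisfies $w_i+w_{L+1-i}=1$ for all $i$. *)

theory Defs
  imports "HOL-Analysis.Analysis"
begin

definition bitlen :: "nat \<Rightarrow> nat" where
  "bitlen n = (LEAST L. n < 2 ^ L)"

definition bdigit :: "nat \<Rightarrow> nat \<Rightarrow> nat" where
  "bdigit n j = (n div 2 ^ j) mod 2"

text \<open>w_i = bdigit n (L - i) for i = 1..L (most significant first);
  the condition w_i + w_(L+1-i) = 1 becomes bdigit n j + bdigit n (L-1-j) = 1 for j < L.\<close>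
definition antipalindromic :: "nat \<Rightarrow> bool" where
  "antipalindromic n \<longleftrightarrow> n > 0 \<and> even (bitlen n) \<and>
     (\<forall>i\<in>{1..bitlen n}. bdigit n (bitlen n - i) + bdigit n (bitlen n - (bitlen n + 1 - i)) = 1)"

definition U_set :: "nat set" where
  "U_set = {N. N > 0 \<and> \<not> (\<exists>A B. antipalindromic A \<and> antipalindromic B \<and> real N = real A / real B)}"

end

theory Submission
  imports Defs
begin

lemma odd_decomp: "(n::nat) > 0 \<Longrightarrow> \<exists>t u. n = 2^t * u \<and> odd u"
proof (induction n rule: less_induct)
  case (less n)
  show ?case
  proof (cases "even n")
    case True
    then obtain m where m: "n = 2*m" by blast
    with less.prems have "m < n" "m > 0" by auto
    from less.IH[OF this] obtain t u where "m = 2^t*u" "odd u" by blast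
    with m have "n = 2^(Suc t) * u" by simp
    with \<open>odd u\<close> show ?thesis by blast
  next
    case False
    then show ?thesis by (rule_tac x=0 in exI) auto
  qed
qed

lemma bitlen_bounds:
  assumes "n > 0"
  shows "n < 2 ^ bitlen n" "bitlen n > 0" "2 ^ (bitlen n - 1) \<le> n"
proof -
  have ex: "n < 2 ^ n" by simp
  show 1: "n < 2 ^ bitlen n" unfolding bitlen_def by (rule LeastI[of _ n], rule ex)
  show 2: "bitlen n > 0" using 1 assms by (cases "bitlen n") auto
  have "\<not> n < 2 ^ (bitlen n - 1)" unfolding bitlen_def
    by (rule not_less_Least) (use 2 in \<open>auto simp: bitlen_def\<close>)
  then show "2 ^ (bitlen n - 1) \<le> n" by simp
qed

lemma antip_digit:
  assumes "antipalindromic A" "j < bitlen A"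
  shows "bdigit A j + bdigit A (bitlen A - 1 - j) = 1"
proof -
  let ?L = "bitlen A"
  have "?L - j \<in> {1..?L}" using assms(2) by auto
  with assms(1) have "bdigit A (?L - (?L - j)) + bdigit A (?L - (?L + 1 - (?L - j))) = 1"
    unfolding antipalindromic_def by blast
  moreover have "?L - (?L - j) = j" "?L - (?L + 1 - (?L - j)) = ?L - 1 - j" using assms(2) by auto
  ultimately show ?thesis by simp
qed

lemma bdigit_div: "bdigit (x div 2^s) i = bdigit x (s+i)"
  unfolding bdigit_def by (simp add: div_mult2_eq power_add)

lemma all_ones: "(\<forall>i<t. bdigit x i = 1) \<Longrightarrow> x < 2^t \<Longrightarrow> x + 1 = 2^t"
proof (induction t arbitrary: x)
  case 0 then show ?case by simp
next
  case (Suc t)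
  have "\<forall>i<t. bdigit (x div 2) i = 1"
    using Suc.prems(1) bdigit_div[of x 1] by auto
  moreover have "x div 2 < 2^t" using Suc.prems(2) by auto
  ultimately have h: "x div 2 + 1 = 2^t" using Suc.IH by blast
  have "x mod 2 = 1" using Suc.prems(1) unfolding bdigit_def by auto
  then have "x = 2 * (x div 2) + 1" by (metis div_mult_mod_eq mult.commute)
  then have "x + 1 = 2 * (x div 2 + 1)" by simp
  also have "\<dots> = 2^Suc t" using h by simp
  finally show ?case .
qed

lemma antip_struct:
  assumes ap: "antipalindromic A" and At: "A = 2^t * u" and oo: "odd u"
  shows "1 \<le> t" "t < bitlen A"
    "2^(t+1) * 2^(bitlen A - t - 1) \<le> A + 2 * 2^(bitlen A - t - 1)"
    "A + 2^(bitlen A - t - 1) < 2^(t+1) * 2^(bitlen A - t - 1)"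
proof -
  let ?L = "bitlen A"
  have Apos: "A > 0" using ap unfolding antipalindromic_def by simp
  note bb = bitlen_bounds[OF Apos]
  have top: "bdigit A (?L - 1) = 1"
  proof -
    have e: "(2::nat)^?L = 2 * 2^(?L - 1)" using bb(2)
      by (metis Suc_diff_1 power_Suc)
    have "A div 2^(?L-1) < 2" using bb(1) e by (simp add: div_less_iff_less_mult)
    moreover have "A div 2^(?L-1) \<ge> 1" using div_le_mono[OF bb(3), of "2^(?L-1)"] by simp
    ultimately have "A div 2^(?L-1) = 1" by simp
    then show ?thesis unfolding bdigit_def by simp
  qed
  have low: "bdigit A j = 0" if "j < t" for j
  proof -
    have tt: "t = j + (t - j)" using that by simp
    have "(2::nat)^t = 2^j * 2^(t-j)" by (subst tt) (simp only: power_add)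
    then have "A = 2^j * (2^(t-j) * u)" using At by (simp add: mult.assoc)
    then have "A div 2^j = 2^(t-j) * u" by simp
    moreover have "even (2^(t-j) * (u::nat))" using that by simp
    ultimately show ?thesis unfolding bdigit_def by simp
  qed
  have digt: "bdigit A t = 1" using At oo unfolding bdigit_def by (simp add: odd_iff_mod_2_eq_one)
  have "u \<ge> 1" using oo by (cases u) auto
  then have "2^t \<le> A" using At by simp
  then have "2^t < (2::nat)^?L" using bb(1) by linarith
  then show tL: "t < ?L" by simp
  show t1: "1 \<le> t"
  proof (rule ccontr)
    assume "\<not> 1 \<le> t"
    then have "t = 0" by simp
    then have "bdigit A 0 = 1" using digt by simp
    with antip_digit[OF ap, of 0] top bb(2) show False by simp
  qed
  define s where "s = ?L - t - 1"
  have Ls: "?L = s + 1 + t" unfolding s_def using tL by simp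
  define q where "q = A div 2^(s+1)"
  have "(2::nat)^?L = 2^(s+1) * 2^t" using Ls by (simp only: power_add)
  then have "A < 2^(s+1) * 2^t" using bb(1) by simp
  then have qlt: "q < 2^t" unfolding q_def by (simp add: div_less_iff_less_mult mult.commute)
  have "\<forall>i<t. bdigit q i = 1"
  proof (intro allI impI)
    fix i assume "i < t"
    have "bdigit q i = bdigit A (s + 1 + i)" unfolding q_def by (rule bdigit_div)
    moreover have "?L - 1 - (s + 1 + i) = t - 1 - i" using \<open>i<t\<close> Ls by simp
    moreover have "bdigit A (t - 1 - i) = 0" using low \<open>i<t\<close> by simp
    moreover have "s + 1 + i < ?L" using \<open>i<t\<close> Ls by simp
    ultimately show "bdigit q i = 1" using antip_digit[OF ap, of "s + 1 + i"] by simp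
  qed
  with qlt have q: "q + 1 = 2^t" using all_ones by blast
  define r where "r = A div 2^s"
  have "r div 2 = q" unfolding r_def q_def by (metis div_mult2_eq power_Suc2 Suc_eq_plus1)
  moreover have "r mod 2 = 0"
  proof -
    have "bdigit A s + bdigit A (?L - 1 - s) = 1"
      using antip_digit[OF ap, of s] Ls by simp
    moreover have "?L - 1 - s = t" using Ls by simp
    ultimately have "bdigit A s = 0" using digt by simp
    then show ?thesis unfolding r_def bdigit_def by simp
  qed
  ultimately have "r = 2 * q" by (metis div_mult_mod_eq add_0_right mult.commute)
  then have r: "r + 2 = 2^(t+1)" using q by simp
  have Ar: "A = r * 2^s + A mod 2^s" unfolding r_def by (rule div_mult_mod_eq[symmetric])
  have m: "A mod 2^s < 2^s" by simp
  have "2^(t+1) * 2^s = r * 2^s + 2 * 2^s" using r by (metis add_mult_distrib)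
  then show "2^(t+1) * 2^(?L - t - 1) \<le> A + 2 * 2^(?L - t - 1)"
    using Ar unfolding s_def[symmetric] by linarith
  show "A + 2^(?L - t - 1) < 2^(t+1) * 2^(?L - t - 1)"
    using Ar m \<open>2^(t+1) * 2^s = r * 2^s + 2 * 2^s\<close> unfolding s_def[symmetric] by linarith
qed

lemma ratio_bound:
  assumes apX: "antipalindromic X" and apY: "antipalindromic Y"
    and Xt: "X = 2^t * u" and ou: "odd u" and Yt: "Y = 2^t * v" and ov: "odd v"
  shows "2 * X * 2^(bitlen Y) < 3 * Y * 2^(bitlen X)"
proof -
  note sx = antip_struct[OF apX Xt ou] and sy = antip_struct[OF apY Yt ov]
  define a where "a = (2::nat)^(bitlen X - t - 1)"
  define b where "b = (2::nat)^(bitlen Y - t - 1)"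
  define T where "T = (2::nat)^(t+1)"
  have T4: "4 \<le> T" unfolding T_def using sx(1)
    by (metis Suc_eq_plus1 Suc_le_mono numeral_Bit0_eq_double one_add_one power_increasing power_one_right power2_eq_square mult_2 le_add2 nat_less_le pos2 zero_less_numeral) 
  have eX: "(2::nat)^(bitlen X) = T * a"
  proof -
    have "bitlen X = (t+1) + (bitlen X - t - 1)" using sx(2) by simp
    then have "(2::nat)^(bitlen X) = 2^((t+1) + (bitlen X - t - 1))" by simp
    then show ?thesis unfolding T_def a_def by (simp only: power_add)
  qed
  have eY: "(2::nat)^(bitlen Y) = T * b"
  proof -
    have "bitlen Y = (t+1) + (bitlen Y - t - 1)" using sy(2) by simp
    then have "(2::nat)^(bitlen Y) = 2^((t+1) + (bitlen Y - t - 1))" by simp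
    then show ?thesis unfolding T_def b_def by (simp only: power_add)
  qed
  have hX: "X + a < T * a" using sx(4) unfolding T_def a_def .
  have hY: "T * b \<le> Y + 2 * b" using sy(3) unfolding T_def b_def .
  have bpos: "b > 0" and apos: "a > 0" unfolding a_def b_def by simp_all
  have 1: "2 * (X * b) + 2 * (a * b) < 2 * (T * (a * b))"
    using mult_strict_right_mono[OF hX bpos] by (simp add: algebra_simps)
  have 2: "3 * (T * (a * b)) \<le> 3 * (Y * a) + 6 * (a * b)"
    using mult_le_mono1[OF hY, of a] by (simp add: algebra_simps)
  have 3: "4 * (a * b) \<le> T * (a * b)" using mult_le_mono1[OF T4, of "a * b"] .
  from 1 2 3 have "2 * (X * b) < 3 * (Y * a)" by linarith
  then have "T * (2 * (X * b)) < T * (3 * (Y * a))" using T4 by simp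
  then show ?thesis unfolding eX eY by (simp add: algebra_simps)
qed

lemma in_U:
  fixes N p :: nat
  assumes oN: "odd N" and l: "3 * 4^p \<le> 2 * N" and h: "3 * N \<le> 8 * 4^p"
  shows "N \<in> U_set"
proof -
  have Npos: "N > 0" using oN by (cases N) auto
  have "\<not> (antipalindromic A \<and> antipalindromic B \<and> real N = real A / real B)" for A B
  proof
    assume H: "antipalindromic A \<and> antipalindromic B \<and> real N = real A / real B"
    then have apA: "antipalindromic A" and apB: "antipalindromic B" by auto
    have Bpos: "B > 0" using apB unfolding antipalindromic_def by simp
    from H Bpos have "real A = real N * real B" by (simp add: field_simps)
    then have AN: "A = N * B" by (metis of_nat_eq_iff of_nat_mult)
    obtain t v where Bt: "B = 2^t * v" and ov: "odd v" using odd_decomp[OF Bpos] by blast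
    have At: "A = 2^t * (N * v)" using AN Bt by (simp add: algebra_simps)
    have onv: "odd (N * v)" using oN ov by simp
    define aa where "aa = (2::nat)^(bitlen A)"
    define bb where "bb = (2::nat)^(bitlen B)"
    define P where "P = (4::nat)^p"
    have r1: "2 * A * bb < 3 * B * aa" unfolding aa_def bb_def by (rule ratio_bound[OF apA apB At onv Bt ov])
    have r2: "2 * B * aa < 3 * A * bb" unfolding aa_def bb_def by (rule ratio_bound[OF apB apA Bt ov At onv])
    have "B * (2 * N * bb) < B * (3 * aa)" using r1 AN by (simp add: algebra_simps)
    then have s1: "2 * N * bb < 3 * aa" using Bpos by simp
    have "B * (2 * aa) < B * (3 * N * bb)" using r2 AN by (simp add: algebra_simps)
    then have s2: "2 * aa < 3 * N * bb" using Bpos by simp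
    have "3 * P * bb \<le> 2 * N * bb" using l unfolding P_def by simp
    with s1 have lo: "P * bb < aa" by linarith
    have "3 * N * bb \<le> 8 * P * bb" using h unfolding P_def by simp
    with s2 have hi: "aa < 4 * P * bb" by linarith
    have Pe: "P * bb = 2^(2*p + bitlen B)" unfolding P_def bb_def
      by (simp add: power_add power_mult)
    have Pe4: "4 * P * bb = 2^(2*p + bitlen B + 2)" unfolding P_def bb_def
      by (simp add: power_add power_mult)
    have "2 * p + bitlen B < bitlen A" using lo unfolding Pe aa_def by simp
    moreover have "bitlen A < 2 * p + bitlen B + 2"
    proof -
      have "(2::nat)^(bitlen A) < 2^(2 * p + bitlen B + 2)" using hi unfolding aa_def Pe4 .
      then show ?thesis using power_less_imp_less_exp by (metis one_less_numeral_iff semiring_norm(76))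
    qed
    ultimately have "bitlen A = 2 * p + bitlen B + 1" by simp
    moreover have "even (bitlen A)" "even (bitlen B)" using apA apB unfolding antipalindromic_def by auto
    ultimately show False by simp
  qed
  then show ?thesis unfolding U_set_def using Npos by blast
qed

lemma count_bound:
  fixes n :: nat
  assumes n16: "n \<ge> 16"
  shows "real n / 32 < real (card (U_set \<inter> {1..n}))"
proof -
  have "n div 16 \<ge> 1" using n16 by simp
  then obtain r where r1: "4^r \<le> n div 16" and r2: "n div 16 < 4^(r+1)"
    using ex_power_ivl1[of 4 "n div 16"] by auto
  define c where "c = 2 * (4::nat)^r"
  have "16 * 4^r \<le> 16 * (n div 16)" using r1 by simp
  also have "\<dots> \<le> n" by simp
  finally have c8: "8 * c \<le> n" unfolding c_def by simp
  have "n < 16 * (n div 16 + 1)" by simp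
  also have "\<dots> \<le> 16 * 4^(r+1)" using r2 by simp
  finally have c32: "n < 32 * c" unfolding c_def by simp
  define G where "G = (\<lambda>i. 3 * c + 2 * i + 1) ` {..<c}"
  have cardG: "card G = c" unfolding G_def by (subst card_image) (auto simp: inj_on_def)
  have "G \<subseteq> U_set \<inter> {1..n}"
  proof
    fix N assume "N \<in> G"
    then obtain i where i: "i < c" and N: "N = 3 * c + 2 * i + 1" unfolding G_def by auto
    have P: "4^(r+1) = 2 * c" unfolding c_def by simp
    have "N \<in> U_set"
    proof (rule in_U[of N "r+1"])
      show "odd N" using N unfolding c_def by simp
      show "3 * 4^(r+1) \<le> 2 * N" unfolding P N by simp
      show "3 * N \<le> 8 * 4^(r+1)" unfolding P N using i by simp
    qed
    moreover have "N \<le> n" using N i c8 by simp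
    ultimately show "N \<in> U_set \<inter> {1..n}" using N by simp
  qed
  then have "c \<le> card (U_set \<inter> {1..n})" using cardG by (metis card_mono finite_Int finite_atLeastAtMost)
  moreover have "real n / 32 < real c" using c32 by simp
  ultimately show ?thesis by linarith
qed

theorem corollary19:
  shows "liminf (\<lambda>n. ereal (real (card (U_set \<inter> {1..n})) / real n)) \<ge> ereal (1/60)"
proof (rule Liminf_bounded)
  show "\<forall>\<^sub>F n in sequentially. ereal (1/60) \<le> ereal (real (card (U_set \<inter> {1..n})) / real n)"
    unfolding eventually_sequentially
  proof (intro exI allI impI)
    fix n :: nat assume n: "16 \<le> n"
    have "real n / 32 < real (card (U_set \<inter> {1..n}))" by (rule count_bound[OF n])
    moreover have "real n > 0" using n by simp
    ultimately have "1/60 \<le> real (card (U_set \<inter> {1..n})) / real n"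
      by (simp add: field_simps)
    then show "ereal (1/60) \<le> ereal (real (card (U_set \<inter> {1..n})) / real n)" by simp
  qed
qed

end
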